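(* Consider a polymatroid game with $n$ players, $m$ resources and demands $d_i$, and let $\delta=\max_{i}d_i$. Consider the following algorithm: initially set $\bar d_i=0$ and $\vec x_i=\vec 0$ for all players $i$. For $k=1,\dots,\sum_i d_i$: choose a player $i$ with $\bar d_i<d_i$, increase $\bar d_i$ by one, and replace $\vec x_i$ by a best response $\vec y_i\in\mathbb{B}_{f_i}(\bar d_i)$ to $\vec x_{-i}$ with $\|\vec y_i-\vec x_i\|=1$; then, while there is a player $j$ who can strictly decrease her private cost by unilaterally changing her strategy within $\mathbb{B}_{f_j}(\bar d_j)$, choose such a player and replace $\vec x_j$ by a best response $\vec y_j\in\mathbb{B}_{f_j}(\bar d_j)$ with $\|\vec y_j-\vec x_j\|=2$. Then the total number of iterations of this algorithm (iterations of the inner while-loop, summed over all rounds) is at most $n^2m\delta^3$.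
   Context: $\mathbb{N}=\{0,1,2,\dots\}$; $\|\cdot\|$ is the $L_1$-norm. A polymatroid game: players $N=\{1,\dots,n\}$, resources $E=\{1,\dots,m\}$; each player $i$ has an integral polymatroid rank function $f_i:2^E\to\mathbb{N}$ (normalized, monotone, submodular) and demand $d_i\le f_i(E)$; the strategy set for demand $d$ is $\mathbb{B}_{f_i}(d)=\{\vec x_i\in\mathbb{N}^E: x_i(U)\le f_i(U)\ \forall U\subseteq E,\ x_i(E)=d\}$, where $x_i(U)=\sum_{e\in U}x_{i,e}$. The private cost is $\pi_i(\vec x)=\sum_{e\in E}C_{i,e}(x_{i,e};x_{-i,e})$, $x_{-i,e}=\sum_{j\neq i}x_{j,e}$, with each $C_{i,e}:\mathbb{N}\times\mathbb{N}\to\mathbb{R}_+$ regular: writing $C^-(x;t)=C(x;t)-C(x-1;t)$ for $x\ge1$, $C^-(x;t)\le C^-(x;t+1)$ and $C^-(x;t+1)\le C^-(x+1;t)$ for all $x\ge1,t\in\mathbb{N}$. A best response of player $i$ to $\vec x_{-i}$ within a strategy set is a strategy minimizing $\pi_i(\cdot,\vec x_{-i})$ over that set. *)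

theory Defs
  imports Complex_Main
begin

text \<open>Players are 0..<n, resources are 0..<m (0-based renaming of {1..n}, {1..m}).
A strategy of one player is a vector in N^E, represented as nat => nat with support in {..<m}.
A strategy profile is nat => nat => nat (player, resource).\<close>

definition polymatroid_rank :: "nat \<Rightarrow> (nat set \<Rightarrow> nat) \<Rightarrow> bool" where
  "polymatroid_rank m f \<longleftrightarrow>
     f {} = 0 \<and>
     (\<forall>U V. U \<subseteq> V \<and> V \<subseteq> {..<m} \<longrightarrow> f U \<le> f V) \<and>
     (\<forall>U V. U \<subseteq> {..<m} \<and> V \<subseteq> {..<m} \<longrightarrow> f (U \<union> V) + f (U \<inter> V) \<le> f U + f V)"

definition regular_cost :: "(nat \<Rightarrow> nat \<Rightarrow> real) \<Rightarrow> bool" where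
  "regular_cost C \<longleftrightarrow>
     (\<forall>x t. C x t \<ge> 0) \<and>
     (\<forall>x t. x \<ge> 1 \<longrightarrow>
        C x t - C (x - 1) t \<le> C x (t + 1) - C (x - 1) (t + 1) \<and>
        C x (t + 1) - C (x - 1) (t + 1) \<le> C (x + 1) t - C x t)"

definition strat_set :: "nat \<Rightarrow> (nat set \<Rightarrow> nat) \<Rightarrow> nat \<Rightarrow> (nat \<Rightarrow> nat) set" where
  "strat_set m f d = {xi. (\<forall>e. e \<ge> m \<longrightarrow> xi e = 0) \<and>
                          (\<forall>U. U \<subseteq> {..<m} \<longrightarrow> sum xi U \<le> f U) \<and>
                          sum xi {..<m} = d}"

definition l1_dist :: "nat \<Rightarrow> (nat \<Rightarrow> nat) \<Rightarrow> (nat \<Rightarrow> nat) \<Rightarrow> nat" where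
  "l1_dist m y z = (\<Sum>e<m. (y e - z e) + (z e - y e))"

definition others_load :: "nat \<Rightarrow> (nat \<Rightarrow> nat \<Rightarrow> nat) \<Rightarrow> nat \<Rightarrow> nat \<Rightarrow> nat" where
  "others_load n x i e = (\<Sum>j\<in>{..<n} - {i}. x j e)"

definition private_cost ::
  "nat \<Rightarrow> nat \<Rightarrow> (nat \<Rightarrow> nat \<Rightarrow> nat \<Rightarrow> nat \<Rightarrow> real) \<Rightarrow> (nat \<Rightarrow> nat \<Rightarrow> nat) \<Rightarrow> nat \<Rightarrow> real" where
  "private_cost n m C x i = (\<Sum>e<m. C i e (x i e) (others_load n x i e))"

definition best_response ::
  "nat \<Rightarrow> nat \<Rightarrow> (nat \<Rightarrow> nat \<Rightarrow> nat \<Rightarrow> nat \<Rightarrow> real) \<Rightarrow> (nat \<Rightarrow> nat) set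
   \<Rightarrow> (nat \<Rightarrow> nat \<Rightarrow> nat) \<Rightarrow> nat \<Rightarrow> (nat \<Rightarrow> nat) \<Rightarrow> bool" where
  "best_response n m C S x i y \<longleftrightarrow> y \<in> S \<and>
     (\<forall>z\<in>S. private_cost n m C (x(i := y)) i \<le> private_cost n m C (x(i := z)) i)"

definition can_improve ::
  "nat \<Rightarrow> nat \<Rightarrow> (nat \<Rightarrow> nat set \<Rightarrow> nat) \<Rightarrow> (nat \<Rightarrow> nat \<Rightarrow> nat \<Rightarrow> nat \<Rightarrow> real)
   \<Rightarrow> (nat \<Rightarrow> nat) \<Rightarrow> (nat \<Rightarrow> nat \<Rightarrow> nat) \<Rightarrow> nat \<Rightarrow> bool" where
  "can_improve n m f C dbar x j \<longleftrightarrow>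
     (\<exists>z\<in>strat_set m (f j) (dbar j). private_cost n m C (x(j := z)) j < private_cost n m C x j)"

definition inc_step ::
  "nat \<Rightarrow> nat \<Rightarrow> (nat \<Rightarrow> nat set \<Rightarrow> nat) \<Rightarrow> (nat \<Rightarrow> nat \<Rightarrow> nat \<Rightarrow> nat \<Rightarrow> real) \<Rightarrow> (nat \<Rightarrow> nat)
   \<Rightarrow> (nat \<Rightarrow> nat) \<times> (nat \<Rightarrow> nat \<Rightarrow> nat) \<Rightarrow> (nat \<Rightarrow> nat) \<times> (nat \<Rightarrow> nat \<Rightarrow> nat) \<Rightarrow> bool" where
  "inc_step n m f C d s s' \<longleftrightarrow>
     (case s of (dbar, x) \<Rightarrow>
       (\<forall>j<n. \<not> can_improve n m f C dbar x j) \<and>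
       (\<exists>i<n. dbar i < d i \<and>
          (\<exists>y. best_response n m C (strat_set m (f i) (dbar i + 1)) x i y \<and>
               l1_dist m y (x i) = 1 \<and>
               s' = (dbar(i := dbar i + 1), x(i := y)))))"

definition imp_step ::
  "nat \<Rightarrow> nat \<Rightarrow> (nat \<Rightarrow> nat set \<Rightarrow> nat) \<Rightarrow> (nat \<Rightarrow> nat \<Rightarrow> nat \<Rightarrow> nat \<Rightarrow> real)
   \<Rightarrow> (nat \<Rightarrow> nat) \<times> (nat \<Rightarrow> nat \<Rightarrow> nat) \<Rightarrow> (nat \<Rightarrow> nat) \<times> (nat \<Rightarrow> nat \<Rightarrow> nat) \<Rightarrow> bool" where
  "imp_step n m f C s s' \<longleftrightarrow>
     (case s of (dbar, x) \<Rightarrow>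
       (\<exists>j<n. can_improve n m f C dbar x j \<and>
          (\<exists>y. best_response n m C (strat_set m (f j) (dbar j)) x j y \<and>
               l1_dist m y (x j) = 2 \<and>
               s' = (dbar, x(j := y)))))"

text \<open>A (finite prefix of an) execution: states st 0 .. st L, labels lab k
 (True = iteration of the inner while loop, False = outer-loop increment).\<close>

definition alg_run ::
  "nat \<Rightarrow> nat \<Rightarrow> (nat \<Rightarrow> nat set \<Rightarrow> nat) \<Rightarrow> (nat \<Rightarrow> nat \<Rightarrow> nat \<Rightarrow> nat \<Rightarrow> real) \<Rightarrow> (nat \<Rightarrow> nat)
   \<Rightarrow> nat \<Rightarrow> (nat \<Rightarrow> (nat \<Rightarrow> nat) \<times> (nat \<Rightarrow> nat \<Rightarrow> nat)) \<Rightarrow> (nat \<Rightarrow> bool) \<Rightarrow> bool" where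
  "alg_run n m f C d L st lab \<longleftrightarrow>
     st 0 = (\<lambda>_. 0, \<lambda>_ _. 0) \<and>
     (\<forall>k<L. if lab k then imp_step n m f C (st k) (st (Suc k))
                     else inc_step n m f C d (st k) (st (Suc k)))"

end

theory Submission
  imports Defs
begin


definition tot :: "nat \<Rightarrow> (nat \<Rightarrow> nat \<Rightarrow> nat) \<Rightarrow> nat \<Rightarrow> nat" where
  "tot n x e = (\<Sum>i<n. x i e)"
definition exch :: "(nat \<Rightarrow> nat) \<Rightarrow> nat \<Rightarrow> nat \<Rightarrow> nat \<Rightarrow> nat" where
  "exch g a b = g(a := g a - 1, b := g b + 1)"
definition phi :: "(nat \<Rightarrow> nat \<Rightarrow> nat \<Rightarrow> nat \<Rightarrow> real) \<Rightarrow> nat \<Rightarrow> nat \<Rightarrow> nat \<Rightarrow> nat \<Rightarrow> real" where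
  "phi C j e k T = C j e k (T - k) - C j e (k - 1) (T - k)"
definition LO :: "(nat \<Rightarrow> nat \<Rightarrow> nat \<Rightarrow> nat \<Rightarrow> real) \<Rightarrow> nat \<Rightarrow> nat \<Rightarrow> (nat \<Rightarrow> nat) set \<Rightarrow> (nat \<Rightarrow> nat) \<Rightarrow> (nat \<Rightarrow> nat) \<Rightarrow> bool" where
  "LO C j m S g T \<longleftrightarrow> (\<forall>a<m. \<forall>b<m. a \<noteq> b \<longrightarrow> 1 \<le> g a \<longrightarrow> exch g a b \<in> S \<longrightarrow>
      phi C j a (g a) (T a) \<le> phi C j b (g b + 1) (T b + 1))"

lemma phi_mono_T:
  assumes "regular_cost (C j e)" "1 \<le> k"
  shows "phi C j e k T \<le> phi C j e k (Suc T)"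
proof (cases "k \<le> T")
  case True
  then have "Suc T - k = Suc (T - k)" by simp
  with assms show ?thesis unfolding regular_cost_def phi_def by auto
next
  case False
  then have "Suc T - k = T - k" by simp
  then show ?thesis unfolding phi_def by simp
qed

lemma phi_mono_k:
  assumes "regular_cost (C j e)" "1 \<le> k"
  shows "phi C j e k T \<le> phi C j e (Suc k) T"
proof (cases "Suc k \<le> T")
  case True
  then have "T - k = Suc (T - Suc k)" by simp
  with assms show ?thesis unfolding regular_cost_def phi_def
    by (metis Suc_eq_plus1 diff_Suc_1)
next
  case False
  then have "T - k = 0" "T - Suc k = 0" by auto
  with assms show ?thesis unfolding regular_cost_def phi_def
    by (smt (verit) One_nat_def Suc_eq_plus1 diff_Suc_1)
qed

lemma sum_two_points:
  fixes g g' :: "'b \<Rightarrow> 'a::comm_monoid_add"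
  assumes "finite A" "a \<in> A" "b \<in> A" "a \<noteq> b" "\<And>e. e \<in> A \<Longrightarrow> e \<noteq> a \<Longrightarrow> e \<noteq> b \<Longrightarrow> g' e = g e"
  shows "sum g' A + g a + g b = sum g A + g' a + g' b"
proof -
  let ?R = "A - {a} - {b}"
  have bR: "b \<in> A - {a}" using assms by auto
  have fA: "finite (A - {a})" using assms by simp
  have 1: "sum g A = g a + (g b + sum g ?R)"
    using sum.remove[OF assms(1) assms(2), of g] sum.remove[OF fA bR, of g] by simp
  have 2: "sum g' A = g' a + (g' b + sum g' ?R)"
    using sum.remove[OF assms(1) assms(2), of g'] sum.remove[OF fA bR, of g'] by simp
  have 3: "sum g' ?R = sum g ?R" using assms by (intro sum.cong) auto
  show ?thesis unfolding 1 2 3 by (simp add: ac_simps)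
qed

lemma sum_upd:
  fixes g :: "'b \<Rightarrow> 'a::comm_monoid_add"
  assumes "finite U"
  shows "sum (g(p := v)) U + (if p \<in> U then g p else 0) = sum g U + (if p \<in> U then v else 0)"
proof (cases "p \<in> U")
  case True
  have "sum (g(p := v)) U = v + sum (g(p:=v)) (U - {p})" using True assms by (simp add: sum.remove)
  moreover have "sum g U = g p + sum g (U - {p})" using True assms by (simp add: sum.remove)
  moreover have "sum (g(p:=v)) (U - {p}) = sum g (U - {p})" by (intro sum.cong) auto
  ultimately show ?thesis using True by (simp add: ac_simps)
next
  case False
  then have "sum (g(p := v)) U = sum g U" by (intro sum.cong) auto
  then show ?thesis using False by simp
qed

lemma sum_exch:
  assumes "finite U" "a \<noteq> b" "1 \<le> g a"
  shows "sum (exch g a b) U + (if a \<in> U then 1 else 0) = sum g U + (if b \<in> U then 1 else 0)"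
proof -
  let ?g1 = "g(a := g a - 1)"
  have e1: "sum ?g1 U + (if a \<in> U then g a else 0) = sum g U + (if a \<in> U then g a - 1 else 0)"
    using sum_upd[OF assms(1)] .
  have e2: "sum (?g1(b := ?g1 b + 1)) U + (if b \<in> U then ?g1 b else 0) = sum ?g1 U + (if b \<in> U then ?g1 b + 1 else 0)"
    using sum_upd[OF assms(1)] .
  show ?thesis using e1 e2 assms(2,3) unfolding exch_def by (auto split: if_splits)
qed

lemma tot_split: "j < n \<Longrightarrow> tot n x e = x j e + others_load n x j e"
  unfolding tot_def others_load_def by (simp add: sum.remove)

lemma others_upd: "others_load n (x(j:=y)) j e = others_load n x j e"
  unfolding others_load_def by (intro sum.cong) auto

lemma tot_upd: "j < n \<Longrightarrow> tot n (x(j:=y)) e + x j e = tot n x e + y e"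
  using tot_split[of j n "x(j:=y)" e] tot_split[of j n x e] others_upd[of n x j y e] by simp

lemma cost_exch:
  assumes "j < n" "a < m" "b < m" "a \<noteq> b" "1 \<le> x j a"
  shows "private_cost n m C (x(j := exch (x j) a b)) j =
         private_cost n m C x j + phi C j b (x j b + 1) (tot n x b + 1) - phi C j a (x j a) (tot n x a)"
proof -
  define ol where "ol = others_load n x j"
  define w where "w = exch (x j) a b"
  have p1: "private_cost n m C (x(j := w)) j = (\<Sum>e<m. C j e (w e) (ol e))"
    unfolding private_cost_def ol_def using others_upd by simp
  have p0: "private_cost n m C x j = (\<Sum>e<m. C j e (x j e) (ol e))"
    unfolding private_cost_def ol_def by simp
  have wa: "w a = x j a - 1" and wb: "w b = x j b + 1" and wo: "\<And>e. e \<noteq> a \<Longrightarrow> e \<noteq> b \<Longrightarrow> w e = x j e"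
    unfolding w_def exch_def using assms by auto
  have st: "(\<Sum>e<m. C j e (w e) (ol e)) + C j a (x j a) (ol a) + C j b (x j b) (ol b)
      = (\<Sum>e<m. C j e (x j e) (ol e)) + C j a (w a) (ol a) + C j b (w b) (ol b)"
    by (rule sum_two_points) (use assms wo in auto)
  have ta: "tot n x a = x j a + ol a" and tb: "tot n x b = x j b + ol b"
    using tot_split[OF assms(1)] ol_def by auto
  have phib: "phi C j b (x j b + 1) (tot n x b + 1) = C j b (x j b + 1) (ol b) - C j b (x j b) (ol b)"
    unfolding phi_def tb by simp
  have phia: "phi C j a (x j a) (tot n x a) = C j a (x j a) (ol a) - C j a (x j a - 1) (ol a)"
    unfolding phi_def ta by simp
  show ?thesis unfolding w_def[symmetric] p1 p0 phia phib using st wa wb by simp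
qed

lemma core_LO:
  assumes "j < n" "\<forall>z\<in>S. private_cost n m C x j \<le> private_cost n m C (x(j:=z)) j"
  shows "LO C j m S (x j) (tot n x)"
  unfolding LO_def
proof (intro allI impI)
  fix a b assume h: "a < m" "b < m" "a \<noteq> b" "1 \<le> x j a" "exch (x j) a b \<in> S"
  have "private_cost n m C x j \<le> private_cost n m C (x(j := exch (x j) a b)) j" using assms(2) h(5) by blast
  then show "phi C j a (x j a) (tot n x a) \<le> phi C j b (x j b + 1) (tot n x b + 1)"
    using cost_exch[of j n a m b x C] assms(1) h(1-4) by simp
qed

lemma one_point:
  fixes u :: "'b \<Rightarrow> nat"
  assumes "finite A" "sum u A = 1"
  shows "\<exists>b\<in>A. u b = 1 \<and> (\<forall>e\<in>A. e \<noteq> b \<longrightarrow> u e = 0)"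
proof -
  obtain b where b: "b \<in> A" "u b \<noteq> 0"
    using assms sum_eq_0_iff[OF assms(1), of u] by auto
  have s: "sum u A = u b + sum u (A - {b})" using assms(1) b(1) by (rule sum.remove)
  then have "u b = 1" "sum u (A - {b}) = 0" using assms(2) b(2) by auto
  then show ?thesis using b(1) assms(1) by auto
qed

lemma pq_split:
  fixes g h :: "nat \<Rightarrow> nat"
  shows "int (sum g A) - int (sum h A) = int (\<Sum>e\<in>A. g e - h e) - int (\<Sum>e\<in>A. h e - g e)"
proof -
  have "\<And>e. int (g e) - int (h e) = int (g e - h e) - int (h e - g e)" by auto
  then have "(\<Sum>e\<in>A. int (g e) - int (h e)) = (\<Sum>e\<in>A. int (g e - h e) - int (h e - g e))" by simp
  then show ?thesis by (simp add: sum_subtractf)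
qed

lemma l1_two:
  fixes g h :: "nat \<Rightarrow> nat"
  assumes "\<forall>e. m \<le> e \<longrightarrow> g e = 0" "\<forall>e. m \<le> e \<longrightarrow> h e = 0"
    "sum g {..<m} = sum h {..<m}" "l1_dist m g h = 2"
  shows "\<exists>a<m. \<exists>b<m. a \<noteq> b \<and> 1 \<le> h a \<and> g = exch h a b"
proof -
  define p where "p = (\<Sum>e<m. g e - h e)"
  define q where "q = (\<Sum>e<m. h e - g e)"
  have "p + q = 2" using assms(4) unfolding l1_dist_def p_def q_def by (simp add: sum.distrib)
  moreover have "int p = int q" using pq_split[of g "{..<m}" h] assms(3) unfolding p_def q_def by simp
  ultimately have pq: "p = 1" "q = 1" by auto
  obtain b where b: "b < m" "g b - h b = 1" "\<forall>e<m. e \<noteq> b \<longrightarrow> g e - h e = 0"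
    using one_point[of "{..<m}" "\<lambda>e. g e - h e"] pq(1) unfolding p_def by auto
  obtain a where a: "a < m" "h a - g a = 1" "\<forall>e<m. e \<noteq> a \<longrightarrow> h e - g e = 0"
    using one_point[of "{..<m}" "\<lambda>e. h e - g e"] pq(2) unfolding q_def by auto
  have ab: "a \<noteq> b" using a b by auto
  have "g = exch h a b"
  proof
    fix e
    show "g e = exch h a b e"
    proof (cases "e < m")
      case True
      then show ?thesis using a b ab unfolding exch_def by (cases "e = a"; cases "e = b") (auto, meson le_antisym)
    next
      case False
      then show ?thesis using assms(1,2) a(1) b(1) unfolding exch_def by auto
    qed
  qed
  moreover have "1 \<le> h a" using a(2) by simp
  ultimately show ?thesis using a(1) b(1) ab by blast
qed

lemma l1_one:
  fixes g h :: "nat \<Rightarrow> nat"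
  assumes "\<forall>e. m \<le> e \<longrightarrow> g e = 0" "\<forall>e. m \<le> e \<longrightarrow> h e = 0"
    "sum g {..<m} = sum h {..<m} + 1" "l1_dist m g h = 1"
  shows "\<exists>c<m. g = h(c := h c + 1)"
proof -
  define p where "p = (\<Sum>e<m. g e - h e)"
  define q where "q = (\<Sum>e<m. h e - g e)"
  have "p + q = 1" using assms(4) unfolding l1_dist_def p_def q_def by (simp add: sum.distrib)
  moreover have "int p = int q + 1" using pq_split[of g "{..<m}" h] assms(3) unfolding p_def q_def by simp
  ultimately have pq: "p = 1" "q = 0" by auto
  obtain b where b: "b < m" "g b - h b = 1" "\<forall>e<m. e \<noteq> b \<longrightarrow> g e - h e = 0"
    using one_point[of "{..<m}" "\<lambda>e. g e - h e"] pq(1) unfolding p_def by auto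
  have q0: "\<forall>e<m. h e - g e = 0" using pq(2) unfolding q_def by simp
  have "g = h(b := h b + 1)"
  proof
    fix e
    show "g e = (h(b := h b + 1)) e"
    proof (cases "e < m")
      case True
      then show ?thesis using b q0 by (cases "e = b") (auto, meson le_antisym)
    next
      case False
      then show ?thesis using assms(1,2) b(1) by auto
    qed
  qed
  then show ?thesis using b by auto
qed

lemma strat_le: "xj \<in> strat_set m F D \<Longrightarrow> e < m \<Longrightarrow> xj e \<le> D"
  unfolding strat_set_def using member_le_sum[of e "{..<m}" xj] by auto

lemma feas:
  assumes "xj \<in> strat_set m F D" "z \<in> strat_set m F D'" "a < m" "b < m" "a \<noteq> b" "1 \<le> xj a"
    "\<forall>U. U \<subseteq> {..<m} \<longrightarrow> b \<in> U \<longrightarrow> a \<notin> U \<longrightarrow> sum xj U + 1 \<le> sum z U"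
  shows "exch xj a b \<in> strat_set m F D"
proof -
  have sup: "\<forall>e. m \<le> e \<longrightarrow> exch xj a b e = 0"
    using assms(1,3,4) unfolding strat_set_def exch_def by auto
  have U: "sum (exch xj a b) U \<le> F U" if "U \<subseteq> {..<m}" for U
  proof -
    have fU: "finite U" using that finite_subset by blast
    have se: "sum (exch xj a b) U + (if a \<in> U then 1 else 0) = sum xj U + (if b \<in> U then 1 else 0)"
      using sum_exch[of U a b xj] fU assms(5,6) by blast
    have x1: "sum xj U \<le> F U" using assms(1) that unfolding strat_set_def by auto
    have z1: "sum z U \<le> F U" using assms(2) that unfolding strat_set_def by auto
    show ?thesis
    proof (cases "b \<in> U \<and> a \<notin> U")
      case True
      have "sum (exch xj a b) U = sum xj U + 1" using se True by simp
      moreover have "sum xj U + 1 \<le> sum z U" using assms(7) that True by blast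
      ultimately show ?thesis using z1 by simp
    next
      case False
      then show ?thesis using se x1 by (auto split: if_splits)
    qed
  qed
  have tot: "sum (exch xj a b) {..<m} = D"
    using sum_exch[of "{..<m}" a b xj] assms(1,3,4,5,6) unfolding strat_set_def by auto
  show ?thesis unfolding strat_set_def using sup U tot by auto
qed

lemma hot_mover:
  assumes reg: "\<forall>e<m. regular_cost (C j e)"
    and lo: "LO C j m S xj L0"
    and T: "\<forall>e. T e = L0 e + (if e = h then 1 else 0)"
    and ab: "a < m" "b < m" "a \<noteq> b" "1 \<le> xj a" "exch xj a b \<in> S"
    and imp: "phi C j b (xj b + 1) (T b + 1) < phi C j a (xj a) (T a)"
  shows "a = h"
proof (rule ccontr)
  assume ah: "a \<noteq> h"
  have 1: "phi C j a (xj a) (L0 a) \<le> phi C j b (xj b + 1) (L0 b + 1)"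
    using lo ab unfolding LO_def by blast
  have 2: "phi C j b (xj b + 1) (L0 b + 1) \<le> phi C j b (xj b + 1) (T b + 1)"
  proof (cases "b = h")
    case True
    then show ?thesis using T phi_mono_T[of C j b "xj b + 1" "L0 b + 1"] reg ab(2) by simp
  next
    case False
    then show ?thesis using T by simp
  qed
  have "T a = L0 a" using T ah by simp
  then show False using 1 2 imp by simp
qed

lemma mover_LO:
  assumes reg: "\<forall>e<m. regular_cost (C j e)"
    and lo: "LO C j m (strat_set m F D) xj L0"
    and hb: "h < m" "b < m" "h \<noteq> b" "1 \<le> xj h"
    and y: "y = exch xj h b" "y \<in> strat_set m F D" "xj \<in> strat_set m F D"
    and loT: "LO C j m (strat_set m F D) y T'"
    and T': "\<forall>e. T' e = L0 e + (if e = b then 1 else 0)"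
  shows "LO C j m (strat_set m F D) y L0"
  unfolding LO_def
proof (intro allI impI)
  fix a e assume ae: "a < m" "e < m" "a \<noteq> e" "1 \<le> y a" "exch y a e \<in> strat_set m F D"
  have base: "phi C j a (y a) (T' a) \<le> phi C j e (y e + 1) (T' e + 1)"
    using loT ae unfolding LO_def by blast
  have yb: "y b = xj b + 1" and yh: "y h = xj h - 1" and yo: "\<And>e. e \<noteq> h \<Longrightarrow> e \<noteq> b \<Longrightarrow> y e = xj e"
    using y(1) hb unfolding exch_def by auto
  show "phi C j a (y a) (L0 a) \<le> phi C j e (y e + 1) (L0 e + 1)"
  proof (cases "e = b")
    case False
    note eb = False
    show ?thesis
    proof (cases "a = b")
      case True
      have "phi C j a (y a) (L0 a) \<le> phi C j a (y a) (Suc (L0 a))"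
        using phi_mono_T[of C j a "y a" "L0 a"] reg ae by simp
      then show ?thesis using base T' True eb by simp
    next
      case False
      then show ?thesis using base T' eb by simp
    qed
  next
    case True
    note eb = True
    have m1: "phi C j b (xj b + 1) (L0 b + 1) \<le> phi C j b (y b + 1) (L0 b + 1)"
      using phi_mono_k[of C j b "xj b + 1" "L0 b + 1"] reg hb yb by simp
    show ?thesis
    proof (cases "a = h")
      case True
      have l: "phi C j h (xj h) (L0 h) \<le> phi C j b (xj b + 1) (L0 b + 1)"
        using lo hb y unfolding LO_def by blast
      have "phi C j h (y h) (L0 h) \<le> phi C j h (Suc (y h)) (L0 h)"
        using phi_mono_k[of C j h "y h" "L0 h"] reg hb ae True by simp
      moreover have "Suc (y h) = xj h" using yh ae True by simp
      ultimately show ?thesis using l m1 True eb by simp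
    next
      case False
      have ab: "a \<noteq> b" using ae eb by simp
      have ya: "y a = xj a" using yo False ab by simp
      have fe: "exch xj a b \<in> strat_set m F D"
      proof (rule feas[OF y(3) ae(5)[unfolded eb]])
        show "a < m" "b < m" "a \<noteq> b" "1 \<le> xj a" using ae hb ab ya by auto
        show "\<forall>U. U \<subseteq> {..<m} \<longrightarrow> b \<in> U \<longrightarrow> a \<notin> U \<longrightarrow> sum xj U + 1 \<le> sum (exch y a b) U"
        proof (intro allI impI)
          fix U assume U: "U \<subseteq> {..<m}" "b \<in> U" "a \<notin> U"
          have fU: "finite U" using U finite_subset by blast
          have s1: "sum y U + (if h \<in> U then 1 else 0) = sum xj U + 1"
            using sum_exch[of U h b xj] fU hb(3) hb(4) y(1) U by simp
          have s2: "sum (exch y a b) U = sum y U + 1"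
            using sum_exch[of U a b y] fU ab ae(4) U by simp
          show "sum xj U + 1 \<le> sum (exch y a b) U" using s1 s2 by (auto split: if_splits)
        qed
      qed
      have l: "phi C j a (xj a) (L0 a) \<le> phi C j b (xj b + 1) (L0 b + 1)"
        using lo fe ae ab ya hb unfolding LO_def by auto
      then show ?thesis using m1 ya eb by simp
    qed
  qed
qed

lemma inc_LO:
  assumes reg: "\<forall>e<m. regular_cost (C j e)"
    and lo: "LO C j m (strat_set m F D) xi L0"
    and c: "c < m"
    and y: "y = xi(c := xi c + 1)" "y \<in> strat_set m F (Suc D)" "xi \<in> strat_set m F D"
    and loT: "LO C j m (strat_set m F (Suc D)) y T'"
    and T': "\<forall>e. T' e = L0 e + (if e = c then 1 else 0)"
  shows "LO C j m (strat_set m F (Suc D)) y L0"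
  unfolding LO_def
proof (intro allI impI)
  fix a e assume ae: "a < m" "e < m" "a \<noteq> e" "1 \<le> y a" "exch y a e \<in> strat_set m F (Suc D)"
  have base: "phi C j a (y a) (T' a) \<le> phi C j e (y e + 1) (T' e + 1)"
    using loT ae unfolding LO_def by blast
  have yc: "y c = xi c + 1" and yo: "\<And>e. e \<noteq> c \<Longrightarrow> y e = xi e"
    using y(1) by auto
  show "phi C j a (y a) (L0 a) \<le> phi C j e (y e + 1) (L0 e + 1)"
  proof (cases "e = c")
    case False
    note eb = False
    show ?thesis
    proof (cases "a = c")
      case True
      have "phi C j a (y a) (L0 a) \<le> phi C j a (y a) (Suc (L0 a))"
        using phi_mono_T[of C j a "y a" "L0 a"] reg ae by simp
      then show ?thesis using base T' True eb by simp
    next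
      case False
      then show ?thesis using base T' eb by simp
    qed
  next
    case True
    note eb = True
    have m1: "phi C j c (xi c + 1) (L0 c + 1) \<le> phi C j c (y c + 1) (L0 c + 1)"
      using phi_mono_k[of C j c "xi c + 1" "L0 c + 1"] reg c yc by simp
    have ab: "a \<noteq> c" using ae eb by simp
    have ya: "y a = xi a" using yo ab by simp
    have fe: "exch xi a c \<in> strat_set m F D"
    proof (rule feas[OF y(3) ae(5)[unfolded eb]])
      show "a < m" "c < m" "a \<noteq> c" "1 \<le> xi a" using ae c ab ya by auto
      show "\<forall>U. U \<subseteq> {..<m} \<longrightarrow> c \<in> U \<longrightarrow> a \<notin> U \<longrightarrow> sum xi U + 1 \<le> sum (exch y a c) U"
      proof (intro allI impI)
        fix U assume U: "U \<subseteq> {..<m}" "c \<in> U" "a \<notin> U"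
        have fU: "finite U" using U finite_subset by blast
        have s1: "sum y U + xi c = sum xi U + (xi c + 1)"
          using sum_upd[OF fU, of xi c "xi c + 1"] y(1) U by simp
        have s2: "sum (exch y a c) U = sum y U + 1"
          using sum_exch[of U a c y] fU ab ae(4) U by simp
        show "sum xi U + 1 \<le> sum (exch y a c) U" using s1 s2 by simp
      qed
    qed
    have l: "phi C j a (xi a) (L0 a) \<le> phi C j c (xi c + 1) (L0 c + 1)"
      using lo fe ae ab ya c unfolding LO_def by auto
    then show ?thesis using m1 ya eb by simp
  qed
qed



definition Vset :: "(nat \<Rightarrow> nat \<Rightarrow> nat \<Rightarrow> nat \<Rightarrow> real) \<Rightarrow> nat \<Rightarrow> nat \<Rightarrow> nat \<Rightarrow> (nat \<Rightarrow> nat) \<Rightarrow> real set" where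
  "Vset C j m dl L0 = (\<lambda>p. phi C j (fst p) (snd p) (L0 (fst p) + 1)) ` ({..<m} \<times> {1..dl})"
definition rk :: "(nat \<Rightarrow> nat \<Rightarrow> nat \<Rightarrow> nat \<Rightarrow> real) \<Rightarrow> nat \<Rightarrow> nat \<Rightarrow> nat \<Rightarrow> (nat \<Rightarrow> nat) \<Rightarrow> real \<Rightarrow> nat" where
  "rk C j m dl L0 r = card {v \<in> Vset C j m dl L0. v < r}"
definition Psi :: "(nat \<Rightarrow> nat \<Rightarrow> nat \<Rightarrow> nat \<Rightarrow> real) \<Rightarrow> nat \<Rightarrow> nat \<Rightarrow> nat \<Rightarrow> (nat \<Rightarrow> nat) \<Rightarrow> (nat \<Rightarrow> nat) \<Rightarrow> nat" where
  "Psi C j m dl L0 g = (\<Sum>e<m. \<Sum>k<g e. rk C j m dl L0 (phi C j e (Suc k) (L0 e + 1)))"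

lemma Vset_fin: "finite (Vset C j m dl L0)"
  unfolding Vset_def by simp

lemma Vset_card: "card (Vset C j m dl L0) \<le> m * dl"
  unfolding Vset_def using card_image_le[of "{..<m} \<times> {1..dl}"] by (simp add: card_cartesian_product)

lemma rk_le: "rk C j m dl L0 r \<le> m * dl"
  unfolding rk_def using Vset_card[of C j m dl L0] card_mono[OF Vset_fin[of C j m dl L0], of "{v \<in> Vset C j m dl L0. v < r}"]
  by auto

lemma Vset_mem: "e < m \<Longrightarrow> 1 \<le> k \<Longrightarrow> k \<le> dl \<Longrightarrow> phi C j e k (L0 e + 1) \<in> Vset C j m dl L0"
  unfolding Vset_def by (rule image_eqI[of _ _ "(e, k)"]) auto

lemma rk_strict:
  assumes "v \<in> Vset C j m dl L0" "v < w"
  shows "rk C j m dl L0 v < rk C j m dl L0 w"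
proof -
  have "{u \<in> Vset C j m dl L0. u < v} \<subset> {u \<in> Vset C j m dl L0. u < w}"
    using assms by auto
  then show ?thesis unfolding rk_def by (rule psubset_card_mono[rotated]) (simp add: Vset_fin)
qed

lemma Psi_bound:
  assumes "g \<in> strat_set m F D"
  shows "Psi C j m dl L0 g \<le> D * (m * dl)"
proof -
  have "Psi C j m dl L0 g \<le> (\<Sum>e<m. g e * (m * dl))"
    unfolding Psi_def
  proof (rule sum_mono)
    fix e
    have "(\<Sum>k<g e. rk C j m dl L0 (phi C j e (Suc k) (L0 e + 1))) \<le> (\<Sum>k<g e. m * dl)"
      by (rule sum_mono) (rule rk_le)
    then show "(\<Sum>k<g e. rk C j m dl L0 (phi C j e (Suc k) (L0 e + 1))) \<le> g e * (m * dl)" by simp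
  qed
  also have "\<dots> = (\<Sum>e<m. g e) * (m * dl)" by (simp add: sum_distrib_right)
  also have "\<dots> = D * (m * dl)" using assms unfolding strat_set_def by simp
  finally show ?thesis .
qed

lemma Psi_exch:
  assumes "h < m" "b < m" "h \<noteq> b" "1 \<le> g h"
  shows "Psi C j m dl L0 (exch g h b) + rk C j m dl L0 (phi C j h (g h) (L0 h + 1))
       = Psi C j m dl L0 g + rk C j m dl L0 (phi C j b (g b + 1) (L0 b + 1))"
proof -
  define r where "r e k = rk C j m dl L0 (phi C j e k (L0 e + 1))" for e k
  define G where "G e p = (\<Sum>k<p. r e (Suc k))" for e p
  have P: "Psi C j m dl L0 g' = (\<Sum>e<m. G e (g' e))" for g' unfolding Psi_def G_def r_def by simp
  have w: "exch g h b h = g h - 1" "exch g h b b = g b + 1" "\<And>e. e \<noteq> h \<Longrightarrow> e \<noteq> b \<Longrightarrow> exch g h b e = g e"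
    unfolding exch_def using assms by auto
  have st: "(\<Sum>e<m. G e (exch g h b e)) + G h (g h) + G b (g b) = (\<Sum>e<m. G e (g e)) + G h (exch g h b h) + G b (exch g h b b)"
    by (rule sum_two_points) (use assms w in auto)
  have gh: "g h = Suc (g h - 1)" using assms by simp
  have Gh: "G h (g h) = G h (g h - 1) + r h (g h)"
    unfolding G_def by (subst gh) (simp, subst gh, simp)
  have Gb: "G b (g b + 1) = G b (g b) + r b (g b + 1)" unfolding G_def by simp
  show ?thesis unfolding P using st Gh Gb w unfolding r_def by simp
qed



definition Inv where
  "Inv n m f C d s L0 h \<longleftrightarrow>
    (\<forall>j<n. snd s j \<in> strat_set m (f j) (fst s j) \<and> fst s j \<le> d j) \<and>
    ((\<forall>j<n. \<not> can_improve n m f C (fst s) (snd s) j) \<or>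
     (h < m \<and> (\<forall>e. tot n (snd s) e = L0 e + (if e = h then 1 else 0)) \<and>
      (\<forall>j<n. LO C j m (strat_set m (f j) (fst s j)) (snd s j) L0)))"

definition Theta where
  "Theta n m C d dl s L0 = (\<Sum>i<n. d i - fst s i) * (n * (dl * (m * dl))) + (\<Sum>j<n. Psi C j m dl L0 (snd s j))"

lemma sum_one_less:
  fixes g g' :: "nat \<Rightarrow> nat"
  assumes "j < n" "g' j < g j" "\<And>i. i < n \<Longrightarrow> i \<noteq> j \<Longrightarrow> g' i = g i"
  shows "(\<Sum>i<n. g' i) < (\<Sum>i<n. g i)"
proof -
  have "(\<Sum>i<n. g' i) = g' j + (\<Sum>i\<in>{..<n} - {j}. g' i)" using assms(1) by (simp add: sum.remove)
  moreover have "(\<Sum>i<n. g i) = g j + (\<Sum>i\<in>{..<n} - {j}. g i)" using assms(1) by (simp add: sum.remove)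
  moreover have "(\<Sum>i\<in>{..<n} - {j}. g' i) = (\<Sum>i\<in>{..<n} - {j}. g i)" using assms(3) by (intro sum.cong) auto
  ultimately show ?thesis using assms(2) by simp
qed

lemma imp_lemma:
  assumes reg: "\<forall>i<n. \<forall>e<m. regular_cost (C i e)"
    and dl: "\<forall>i<n. d i \<le> dl"
    and inv: "Inv n m f C d s L0 h"
    and st: "imp_step n m f C s s'"
  shows "\<exists>h'. Inv n m f C d s' L0 h' \<and> Theta n m C d dl s' L0 < Theta n m C d dl s L0"
proof -
  obtain dbar x where s: "s = (dbar, x)" by (cases s)
  obtain j y where j: "j < n" "can_improve n m f C dbar x j"
    and br: "best_response n m C (strat_set m (f j) (dbar j)) x j y"
    and dy: "l1_dist m y (x j) = 2" and s': "s' = (dbar, x(j := y))"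
    using st unfolding imp_step_def s by auto
  define S where "S = strat_set m (f j) (dbar j)"
  have strat: "\<forall>i<n. x i \<in> strat_set m (f i) (dbar i) \<and> dbar i \<le> d i" using inv s unfolding Inv_def by simp
  have hot: "h < m" "\<forall>e. tot n x e = L0 e + (if e = h then 1 else 0)"
     "\<forall>i<n. LO C i m (strat_set m (f i) (dbar i)) (x i) L0"
    using inv j s unfolding Inv_def by auto
  have yS: "y \<in> S" using br unfolding best_response_def S_def by simp
  have xS: "x j \<in> S" using strat j unfolding S_def by simp
  obtain a b where ab: "a < m" "b < m" "a \<noteq> b" "1 \<le> x j a" "y = exch (x j) a b"
    using l1_two[of m y "x j"] yS xS dy unfolding S_def strat_set_def by auto
  obtain z where z: "z \<in> S" "private_cost n m C (x(j := z)) j < private_cost n m C x j"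
    using j(2) unfolding can_improve_def S_def by auto
  have "private_cost n m C (x(j := y)) j \<le> private_cost n m C (x(j := z)) j"
    using br z(1) unfolding best_response_def S_def by auto
  with z(2) have lt: "private_cost n m C (x(j := y)) j < private_cost n m C x j" by simp
  have strict: "phi C j b (x j b + 1) (tot n x b + 1) < phi C j a (x j a) (tot n x a)"
    using lt cost_exch[of j n a m b x C] j(1) ab by simp
  have regj: "\<forall>e<m. regular_cost (C j e)" using reg j by simp
  have ah: "a = h"
    using hot_mover[OF regj hot(3)[rule_format, OF j(1)] hot(2) ab(1-4)] ab(5) yS strict unfolding S_def by simp
  have bh: "b \<noteq> h" using ab ah by simp
  define x' where "x' = x(j := y)"
  have yv: "y h = x j h - 1" "y b = x j b + 1" "\<And>e. e \<noteq> h \<Longrightarrow> e \<noteq> b \<Longrightarrow> y e = x j e"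
    using ab ah unfolding exch_def by auto
  have tot': "\<forall>e. tot n x' e = L0 e + (if e = b then 1 else 0)"
  proof
    fix e
    have "tot n x' e + x j e = tot n x e + y e" unfolding x'_def by (rule tot_upd[OF j(1)])
    then show "tot n x' e = L0 e + (if e = b then 1 else 0)"
      using hot(2) yv ab ah bh by (cases "e = h"; cases "e = b") auto
  qed
  have loT: "LO C j m S y (tot n x')"
  proof -
    have "\<forall>z\<in>S. private_cost n m C x' j \<le> private_cost n m C (x'(j:=z)) j"
      using br unfolding best_response_def S_def x'_def by simp
    from core_LO[OF j(1) this] show ?thesis unfolding x'_def by simp
  qed
  have loy: "LO C j m S y L0"
    unfolding S_def
    by (rule mover_LO[OF regj hot(3)[rule_format, OF j(1)] hot(1) ab(2) bh[symmetric] _ _ _ _ _ tot'])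
       (use ab ah yS xS loT in \<open>auto simp: S_def\<close>)
  have inv': "Inv n m f C d s' L0 b"
  proof -
    have A: "\<forall>i<n. x' i \<in> strat_set m (f i) (dbar i) \<and> dbar i \<le> d i"
      using strat yS j unfolding x'_def S_def by auto
    have B: "\<forall>i<n. LO C i m (strat_set m (f i) (dbar i)) (x' i) L0"
      using loy hot(3) unfolding x'_def S_def by auto
    show ?thesis unfolding Inv_def s' x'_def[symmetric] using A B tot' ab(2) by auto
  qed
  have pdec: "Psi C j m dl L0 y < Psi C j m dl L0 (x j)"
  proof -
    have ph: "phi C j b (x j b + 1) (L0 b + 1) < phi C j h (x j h) (L0 h + 1)"
      using strict hot(2) ah bh by simp
    have "x j b + 1 \<le> dl" using strat_le[OF yS[unfolded S_def] ab(2)] yv strat j dl by fastforce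
    then have mem: "phi C j b (x j b + 1) (L0 b + 1) \<in> Vset C j m dl L0"
      using Vset_mem[OF ab(2)] by simp
    have "rk C j m dl L0 (phi C j b (x j b + 1) (L0 b + 1)) < rk C j m dl L0 (phi C j h (x j h) (L0 h + 1))"
      by (rule rk_strict[OF mem ph])
    moreover have "Psi C j m dl L0 y + rk C j m dl L0 (phi C j h (x j h) (L0 h + 1))
       = Psi C j m dl L0 (x j) + rk C j m dl L0 (phi C j b (x j b + 1) (L0 b + 1))"
      using Psi_exch[OF hot(1) ab(2) bh[symmetric], of "x j" C j dl L0] ab ah by simp
    ultimately show ?thesis by simp
  qed
  have "(\<Sum>i<n. Psi C i m dl L0 (x' i)) < (\<Sum>i<n. Psi C i m dl L0 (x i))"
    by (rule sum_one_less[OF j(1)]) (use pdec in \<open>auto simp: x'_def\<close>)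
  then have "Theta n m C d dl s' L0 < Theta n m C d dl s L0"
    unfolding Theta_def s s' x'_def by simp
  with inv' show ?thesis by blast
qed

lemma inc_lemma:
  assumes reg: "\<forall>i<n. \<forall>e<m. regular_cost (C i e)"
    and dl: "\<forall>i<n. d i \<le> dl"
    and inv: "Inv n m f C d s L0 h"
    and st: "inc_step n m f C d s s'"
  shows "\<exists>L0' h'. Inv n m f C d s' L0' h' \<and> Theta n m C d dl s' L0' \<le> Theta n m C d dl s L0"
proof -
  obtain dbar x where s: "s = (dbar, x)" by (cases s)
  obtain i y where noimp: "\<forall>j<n. \<not> can_improve n m f C dbar x j"
    and i: "i < n" "dbar i < d i"
    and br: "best_response n m C (strat_set m (f i) (dbar i + 1)) x i y"
    and dy: "l1_dist m y (x i) = 1" and s': "s' = (dbar(i := dbar i + 1), x(i := y))"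
    using st unfolding inc_step_def s by auto
  define S where "S = strat_set m (f i) (Suc (dbar i))"
  define L0' where "L0' = tot n x"
  define dbar' where "dbar' = dbar(i := dbar i + 1)"
  define x' where "x' = x(i := y)"
  have strat: "\<forall>j<n. x j \<in> strat_set m (f j) (dbar j) \<and> dbar j \<le> d j" using inv s unfolding Inv_def by simp
  have yS: "y \<in> S" using br unfolding best_response_def S_def by simp
  have xS: "x i \<in> strat_set m (f i) (dbar i)" using strat i by simp
  obtain c where c: "c < m" "y = (x i)(c := x i c + 1)"
    using l1_one[of m y "x i"] yS xS dy unfolding S_def strat_set_def by auto
  have lo0: "\<forall>j<n. LO C j m (strat_set m (f j) (dbar j)) (x j) L0'"
  proof (intro allI impI)
    fix j assume j: "j < n"
    have "\<forall>z\<in>strat_set m (f j) (dbar j). private_cost n m C x j \<le> private_cost n m C (x(j:=z)) j"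
      using noimp j unfolding can_improve_def by (auto simp: not_less)
    from core_LO[OF j this] show "LO C j m (strat_set m (f j) (dbar j)) (x j) L0'" unfolding L0'_def .
  qed
  have tot': "\<forall>e. tot n x' e = L0' e + (if e = c then 1 else 0)"
  proof
    fix e
    have "tot n x' e + x i e = tot n x e + y e" unfolding x'_def by (rule tot_upd[OF i(1)])
    then show "tot n x' e = L0' e + (if e = c then 1 else 0)"
      using c unfolding L0'_def by (cases "e = c") auto
  qed
  have regi: "\<forall>e<m. regular_cost (C i e)" using reg i by simp
  have loT: "LO C i m S y (tot n x')"
  proof -
    have "\<forall>z\<in>S. private_cost n m C x' i \<le> private_cost n m C (x'(i:=z)) i"
      using br unfolding best_response_def S_def x'_def by simp
    from core_LO[OF i(1) this] show ?thesis unfolding x'_def by simp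
  qed
  have loy: "LO C i m S y L0'"
    unfolding S_def
    by (rule inc_LO[OF regi lo0[rule_format, OF i(1)] c(1) c(2) _ xS _ tot'])
       (use yS loT in \<open>auto simp: S_def\<close>)
  have A: "\<forall>j<n. x' j \<in> strat_set m (f j) (dbar' j) \<and> dbar' j \<le> d j"
    using strat yS i unfolding x'_def dbar'_def S_def by auto
  have B: "\<forall>j<n. LO C j m (strat_set m (f j) (dbar' j)) (x' j) L0'"
    using loy lo0 unfolding x'_def dbar'_def S_def by auto
  have inv': "Inv n m f C d s' L0' c"
    unfolding Inv_def s' x'_def[symmetric] dbar'_def[symmetric] using A B tot' c(1) by auto
  define BB where "BB = n * (dl * (m * dl))"
  have psi: "(\<Sum>j<n. Psi C j m dl L0' (x' j)) \<le> BB"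
  proof -
    have "(\<Sum>j<n. Psi C j m dl L0' (x' j)) \<le> (\<Sum>j<n. dl * (m * dl))"
    proof (rule sum_mono)
      fix j assume "j \<in> {..<n}"
      then have "x' j \<in> strat_set m (f j) (dbar' j)" "dbar' j \<le> dl" using A dl by (auto, meson le_trans lessThan_iff)
      then show "Psi C j m dl L0' (x' j) \<le> dl * (m * dl)"
        using Psi_bound[of "x' j" m "f j" "dbar' j" C j dl L0'] by (meson le_trans mult_le_mono1)
    qed
    then show ?thesis unfolding BB_def by simp
  qed
  have dsum: "(\<Sum>k<n. d k - dbar' k) + 1 = (\<Sum>k<n. d k - dbar k)"
  proof -
    have "(\<Sum>k<n. d k - dbar' k) = (d i - dbar' i) + (\<Sum>k\<in>{..<n}-{i}. d k - dbar' k)"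
      using i by (simp add: sum.remove)
    moreover have "(\<Sum>k<n. d k - dbar k) = (d i - dbar i) + (\<Sum>k\<in>{..<n}-{i}. d k - dbar k)"
      using i by (simp add: sum.remove)
    moreover have "(\<Sum>k\<in>{..<n}-{i}. d k - dbar' k) = (\<Sum>k\<in>{..<n}-{i}. d k - dbar k)"
      unfolding dbar'_def by (intro sum.cong) auto
    ultimately show ?thesis using i unfolding dbar'_def by simp
  qed
  have "Theta n m C d dl s' L0' \<le> (\<Sum>k<n. d k - dbar' k) * BB + BB"
    unfolding Theta_def s' x'_def[symmetric] dbar'_def[symmetric] BB_def[symmetric] using psi by simp
  also have "\<dots> = (\<Sum>k<n. d k - dbar k) * BB" using dsum by (metis add_mult_distrib mult_1)
  also have "\<dots> \<le> Theta n m C d dl s L0" unfolding Theta_def s BB_def by simp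
  finally show ?thesis using inv' by blast
qed

lemma strat_zero: "z \<in> strat_set m F 0 \<Longrightarrow> z = (\<lambda>_. 0)"
proof
  fix e assume z: "z \<in> strat_set m F 0"
  show "z e = 0"
  proof (cases "e < m")
    case True
    have "sum z {..<m} = 0" using z unfolding strat_set_def by simp
    then show ?thesis using True by simp
  next
    case False
    then show ?thesis using z unfolding strat_set_def by simp
  qed
qed

lemma init_inv:
  "Inv n m f C d (\<lambda>_. 0, \<lambda>_ _. 0) L0 h"
proof -
  have A: "(\<lambda>_. 0) \<in> strat_set m F 0" for F unfolding strat_set_def by simp
  have B: "\<not> can_improve n m f C (\<lambda>_. 0) (\<lambda>_ _. 0) j" for j
  proof
    assume "can_improve n m f C (\<lambda>_. 0) (\<lambda>_ _. 0) j"
    then obtain z where "z \<in> strat_set m (f j) 0"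
      "private_cost n m C ((\<lambda>_ _. 0)(j := z)) j < private_cost n m C (\<lambda>_ _. 0) j"
      unfolding can_improve_def by auto
    moreover have "((\<lambda>_ _. 0)(j := z)) = (\<lambda>_ _. (0::nat))" using strat_zero calculation(1) by auto
    ultimately show False by simp
  qed
  show ?thesis unfolding Inv_def using A B by auto
qed

lemma card_step: "card {i. i < Suc k \<and> lab i} = card {i. i < k \<and> lab i} + (if lab k then 1 else 0)"
proof -
  have fin: "finite {i. i < k \<and> lab i}" by simp
  show ?thesis
  proof (cases "lab k")
    case True
    then have "{i. i < Suc k \<and> lab i} = insert k {i. i < k \<and> lab i}" by auto
    then show ?thesis using True fin by simp
  next
    case False
    then have "{i. i < Suc k \<and> lab i} = {i. i < k \<and> lab i}" using less_Suc_eq by auto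
    then show ?thesis using False by simp
  qed
qed

lemma run_bound:
  assumes reg: "\<forall>i<n. \<forall>e<m. regular_cost (C i e)"
    and dl: "\<forall>i<n. d i \<le> dl"
    and run: "alg_run n m f C d L st lab"
  shows "k \<le> L \<Longrightarrow> \<exists>L0 h. Inv n m f C d (st k) L0 h \<and>
     card {i. i < k \<and> lab i} + Theta n m C d dl (st k) L0 \<le> (\<Sum>i<n. d i) * (n * (dl * (m * dl)))"
proof (induction k)
  case 0
  have s0: "st 0 = (\<lambda>_. 0, \<lambda>_ _. 0)" using run unfolding alg_run_def by simp
  have "Theta n m C d dl (st 0) (\<lambda>_. 0) = (\<Sum>i<n. d i) * (n * (dl * (m * dl)))"
    unfolding Theta_def s0 Psi_def by simp
  moreover have "Inv n m f C d (st 0) (\<lambda>_. 0) 0" using init_inv s0 by simp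
  ultimately show ?case by (intro exI[of _ "\<lambda>_. 0"] exI[of _ 0]) simp
next
  case (Suc k)
  then obtain L0 h where ih: "Inv n m f C d (st k) L0 h"
    "card {i. i < k \<and> lab i} + Theta n m C d dl (st k) L0 \<le> (\<Sum>i<n. d i) * (n * (dl * (m * dl)))"
    by auto
  have kL: "k < L" using Suc by simp
  show ?case
  proof (cases "lab k")
    case True
    then have "imp_step n m f C (st k) (st (Suc k))" using run kL unfolding alg_run_def by auto
    from imp_lemma[OF reg dl ih(1) this] obtain h' where
      "Inv n m f C d (st (Suc k)) L0 h'" "Theta n m C d dl (st (Suc k)) L0 < Theta n m C d dl (st k) L0"
      by blast
    then show ?thesis using ih(2) card_step[of k lab] True by (intro exI[of _ L0] exI[of _ h']) auto
  next
    case False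
    then have "inc_step n m f C d (st k) (st (Suc k))" using run kL unfolding alg_run_def by auto
    from inc_lemma[OF reg dl ih(1) this] obtain L0' h' where
      "Inv n m f C d (st (Suc k)) L0' h'" "Theta n m C d dl (st (Suc k)) L0' \<le> Theta n m C d dl (st k) L0"
      by blast
    then show ?thesis using ih(2) card_step[of k lab] False by (intro exI[of _ L0'] exI[of _ h']) auto
  qed
qed

theorem corollary5p2:
  fixes n m :: nat
    and f :: "nat \<Rightarrow> nat set \<Rightarrow> nat"
    and C :: "nat \<Rightarrow> nat \<Rightarrow> nat \<Rightarrow> nat \<Rightarrow> real"
    and d :: "nat \<Rightarrow> nat"
    and L :: nat
    and st :: "nat \<Rightarrow> (nat \<Rightarrow> nat) \<times> (nat \<Rightarrow> nat \<Rightarrow> nat)"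
    and lab :: "nat \<Rightarrow> bool"
  assumes "\<forall>i<n. polymatroid_rank m (f i)"
    and "\<forall>i<n. \<forall>e<m. regular_cost (C i e)"
    and "\<forall>i<n. d i \<le> f i {..<m}"
    and "alg_run n m f C d L st lab"
  shows "card {k. k < L \<and> lab k} \<le> n ^ 2 * m * (Max (d ` {..<n})) ^ 3"
proof -
  define dl where "dl = Max (d ` {..<n})"
  have dl: "\<forall>i<n. d i \<le> dl" unfolding dl_def by (auto intro: Max_ge)
  obtain L0 h where "card {i. i < L \<and> lab i} + Theta n m C d dl (st L) L0 \<le> (\<Sum>i<n. d i) * (n * (dl * (m * dl)))"
    using run_bound[OF assms(2) dl assms(4), of L] by auto
  then have c: "card {i. i < L \<and> lab i} \<le> (\<Sum>i<n. d i) * (n * (dl * (m * dl)))" by simp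
  have "(\<Sum>i<n. d i) \<le> n * dl" using sum_bounded_above[of "{..<n}" d dl] dl by simp
  then have "(\<Sum>i<n. d i) * (n * (dl * (m * dl))) \<le> (n * dl) * (n * (dl * (m * dl)))" by (rule mult_le_mono1)
  also have "\<dots> = n ^ 2 * m * dl ^ 3" by (simp add: power2_eq_square power3_eq_cube)
  finally have X: "(\<Sum>i<n. d i) * (n * (dl * (m * dl))) \<le> n ^ 2 * m * dl ^ 3" .
  have "card {i. i < L \<and> lab i} \<le> n ^ 2 * m * dl ^ 3" by (rule le_trans[OF c X])
  then show ?thesis by (simp only: dl_def)
qed


end
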